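(* Let $(X,U,f)$ be a robot grid search problem and $k\in\mathbb{N}$. Consider the automaton with state set $X\times U^k$, input alphabet $U$ and transition $\hat f\big((x,(u_1,\ldots,u_k)),u\big):=\big(f(x,u_1),(u_2,\ldots,u_k,u)\big)$. Then $X\times U^k$ is an essential class for this automaton; i.e., every state of $X\times U^k$ is reachable from every other state of $X\times U^k$ by some finite input sequence.
   Context: A robot grid search problem: $X\subset\mathbb{Z}\times\mathbb{Z}$ is finite and connected (any two points are joined by a chain of points in $X$ with consecutive points at Euclidean distance $1$), $U=\{(-1,0),(1,0),(0,1),(0,-1)\}$, and $f(x,u)=x+u$ if $x+u\in X$, $f(x,u)=x$ otherwise. For a transition function, applying a finite input sequence means applying its symbols successively. A state $x'$ is reachable from $x$ if some finite input sequence takes $x$ to $x'$; an essential class is a maximal set of states all mutually reachable. *)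

theory Defs
  imports Main
begin

type_synonym pt = "int \<times> int"

definition U :: "pt set" where
  "U = {(-1,0), (1,0), (0,1), (0,-1)}"

definition padd :: "pt \<Rightarrow> pt \<Rightarrow> pt" where
  "padd x u = (fst x + fst u, snd x + snd u)"

definition adjacent :: "pt \<Rightarrow> pt \<Rightarrow> bool" where
  "adjacent p q \<longleftrightarrow> (fst p - fst q)^2 + (snd p - snd q)^2 = 1"

definition grid_connected :: "pt set \<Rightarrow> bool" where
  "grid_connected X \<longleftrightarrow> (\<forall>p\<in>X. \<forall>q\<in>X. \<exists>c. c \<noteq> [] \<and> hd c = p \<and> last c = q \<and>
      set c \<subseteq> X \<and> (\<forall>i. Suc i < length c \<longrightarrow> adjacent (c ! i) (c ! Suc i)))"

definition robot_f :: "pt set \<Rightarrow> pt \<Rightarrow> pt \<Rightarrow> pt" where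
  "robot_f X x u = (if padd x u \<in> X then padd x u else x)"

definition run :: "('s \<Rightarrow> 'u \<Rightarrow> 's) \<Rightarrow> 's \<Rightarrow> 'u list \<Rightarrow> 's" where
  "run \<delta> s w = foldl \<delta> s w"

definition reachable :: "'u set \<Rightarrow> ('s \<Rightarrow> 'u \<Rightarrow> 's) \<Rightarrow> 's \<Rightarrow> 's \<Rightarrow> bool" where
  "reachable Sig \<delta> s s' \<longleftrightarrow> (\<exists>w. set w \<subseteq> Sig \<and> run \<delta> s w = s')"

definition essential_class :: "'s set \<Rightarrow> 'u set \<Rightarrow> ('s \<Rightarrow> 'u \<Rightarrow> 's) \<Rightarrow> 's set \<Rightarrow> bool" where
  "essential_class S Sig \<delta> C \<longleftrightarrow> C \<noteq> {} \<and> C \<subseteq> S \<and>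
     (\<forall>s\<in>C. \<forall>t\<in>C. reachable Sig \<delta> s t) \<and>
     (\<forall>D. D \<subseteq> S \<and> C \<subseteq> D \<and> (\<forall>s\<in>D. \<forall>t\<in>D. reachable Sig \<delta> s t) \<longrightarrow> D = C)"

definition hist_states :: "pt set \<Rightarrow> nat \<Rightarrow> (pt \<times> pt list) set" where
  "hist_states X k = {(x, us). x \<in> X \<and> length us = k \<and> set us \<subseteq> U}"

definition f_hat :: "pt set \<Rightarrow> nat \<Rightarrow> (pt \<times> pt list) \<Rightarrow> pt \<Rightarrow> (pt \<times> pt list)" where
  "f_hat X k s u = (case s of (x, us) \<Rightarrow>
      if k = 0 then (robot_f X x u, [])
      else (robot_f X x (hd us), tl us @ [u]))"

end

theory Submission
  imports Defs
begin

lemma sq1_cases: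
  fixes s t :: int
  assumes "s^2 + t^2 = 1"
  shows "(s = 1 \<or> s = -1) \<and> t = 0 \<or> s = 0 \<and> (t = 1 \<or> t = -1)"
proof -
  have a: "\<bar>s\<bar> \<le> 1"
  proof (rule ccontr)
    assume "\<not> \<bar>s\<bar> \<le> 1"
    hence "\<bar>s\<bar> \<ge> 2" by simp
    hence "\<bar>s\<bar> * \<bar>s\<bar> \<ge> 2 * 2" by (metis mult_mono abs_ge_zero order_trans zero_le_numeral)
    hence "s^2 \<ge> 4" by (simp add: power2_eq_square abs_mult[symmetric])
    moreover have "t^2 \<ge> 0" by simp
    ultimately show False using assms by linarith
  qed
  have b: "\<bar>t\<bar> \<le> 1"
  proof (rule ccontr)
    assume "\<not> \<bar>t\<bar> \<le> 1"
    hence "\<bar>t\<bar> \<ge> 2" by simp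
    hence "\<bar>t\<bar> * \<bar>t\<bar> \<ge> 2 * 2" by (metis mult_mono abs_ge_zero order_trans zero_le_numeral)
    hence "t^2 \<ge> 4" by (simp add: power2_eq_square abs_mult[symmetric])
    moreover have "s^2 \<ge> 0" by simp
    ultimately show False using assms by linarith
  qed
  have "s \<in> {-1,0,1}" "t \<in> {-1,0,1}" using a b by auto
  thus ?thesis using assms by auto
qed

lemma adj_U:
  assumes "adjacent p q"
  shows "\<exists>u\<in>U. padd p u = q"
proof -
  obtain a b where p: "p = (a,b)" by (cases p)
  obtain c d where q: "q = (c,d)" by (cases q)
  have "(c-a)^2 + (d-b)^2 = 1" using assms p q unfolding adjacent_def
    by (simp add: power2_commute)
  from sq1_cases[OF this] show ?thesis
    unfolding U_def padd_def p q by auto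
qed

lemma robot_in: "x \<in> X \<Longrightarrow> robot_f X x u \<in> X"
  unfolding robot_f_def by auto

lemma run_in: "x \<in> X \<Longrightarrow> foldl (robot_f X) x w \<in> X"
  by (induction w arbitrary: x) (auto simp: robot_in)

lemma chain_path:
  "c \<noteq> [] \<Longrightarrow> set c \<subseteq> X \<Longrightarrow> (\<forall>i. Suc i < length c \<longrightarrow> adjacent (c ! i) (c ! Suc i))
   \<Longrightarrow> \<exists>w. set w \<subseteq> U \<and> foldl (robot_f X) (hd c) w = last c"
proof (induction c)
  case Nil
  then show ?case by simp
next
  case (Cons a c)
  show ?case
  proof (cases "c = []")
    case True
    then show ?thesis by (intro exI[of _ "[]"]) simp
  next
    case False
    have adj: "adjacent a (hd c)" using Cons.prems(3)[rule_format, of 0] False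
      by (simp add: hd_conv_nth)
    have "\<forall>i. Suc i < length c \<longrightarrow> adjacent (c ! i) (c ! Suc i)"
    proof (intro allI impI)
      fix i assume "Suc i < length c"
      thus "adjacent (c ! i) (c ! Suc i)" using Cons.prems(3)[rule_format, of "Suc i"] by simp
    qed
    then obtain w where w: "set w \<subseteq> U" "foldl (robot_f X) (hd c) w = last c"
      using Cons.IH False Cons.prems(2) by auto
    obtain u where u: "u \<in> U" "padd a u = hd c" using adj_U[OF adj] by blast
    have "hd c \<in> X" using False Cons.prems(2) by auto
    hence "robot_f X a u = hd c" using u unfolding robot_f_def by simp
    thus ?thesis using w u False by (intro exI[of _ "u # w"]) simp
  qed
qed

lemma conn_path:
  assumes "grid_connected X" "p \<in> X" "q \<in> X"
  shows "\<exists>w. set w \<subseteq> U \<and> foldl (robot_f X) p w = q"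
  using assms chain_path unfolding grid_connected_def by metis

lemma run_fhat:
  assumes "length us = k"
  shows "foldl (f_hat X k) (x, us) w =
    (foldl (robot_f X) x (take (length w) (us @ w)), drop (length w) (us @ w))"
proof (induction w rule: rev_induct)
  case Nil
  then show ?case using assms by simp
next
  case (snoc u w)
  let ?h = "drop (length w) (us @ w)"
  have lh: "length ?h = k" using assms by simp
  have tk: "take (Suc (length w)) (us @ w @ [u]) = take (length w) (us @ w) @ [(us @ w @ [u]) ! length w]"
  proof -
    have "length w < length (us @ w @ [u])" by simp
    hence "take (Suc (length w)) (us @ w @ [u]) = take (length w) (us @ w @ [u]) @ [(us @ w @ [u]) ! length w]"
      by (rule take_Suc_conv_app_nth)
    moreover have "take (length w) (us @ w @ [u]) = take (length w) (us @ w)"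
      using assms by (simp add: take_append)
    ultimately show ?thesis by simp
  qed
  show ?case
  proof (cases "k = 0")
    case True
    then show ?thesis using snoc assms by (simp add: f_hat_def)
  next
    case False
    have lt: "length w < length (us @ w)" using False assms by simp
    have "(us @ w @ [u]) ! length w = (us @ w) ! length w"
      using lt by (metis append_assoc nth_append)
    also have "\<dots> = hd ?h" using lt by (simp only: hd_drop_conv_nth)
    finally have "(us @ w @ [u]) ! length w = hd ?h" .
    moreover have "drop (Suc (length w)) (us @ w @ [u]) = tl ?h @ [u]"
    proof -
      have "drop (Suc (length w)) ((us @ w) @ [u]) = drop (Suc (length w)) (us @ w) @ [u]"
        using lt by (subst drop_append) (simp add: Suc_leI)
      moreover have "drop (Suc (length w)) (us @ w) = tl ?h"
        by (simp only: drop_Suc tl_drop)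
      ultimately show ?thesis by simp
    qed
    ultimately show ?thesis using snoc False tk by (simp add: f_hat_def)
  qed
qed

theorem lemma1:
  fixes X :: "(int \<times> int) set" and k :: nat
  assumes "finite X" and "X \<noteq> {}" and "grid_connected X"
  shows "essential_class (hist_states X k) U (f_hat X k) (hist_states X k)"
proof -
  obtain x0 where x0: "x0 \<in> X" using assms(2) by blast
  have ne: "hist_states X k \<noteq> {}"
  proof -
    have "(x0, replicate k (1,0)) \<in> hist_states X k"
      using x0 unfolding hist_states_def U_def by auto
    thus ?thesis by blast
  qed
  have reach: "reachable U (f_hat X k) s t" if s: "s \<in> hist_states X k" and t: "t \<in> hist_states X k" for s t
  proof -
    obtain x us where s': "s = (x, us)" "x \<in> X" "length us = k" "set us \<subseteq> U"
      using s unfolding hist_states_def by auto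
    obtain y vs where t': "t = (y, vs)" "y \<in> X" "length vs = k" "set vs \<subseteq> U"
      using t unfolding hist_states_def by auto
    have x': "foldl (robot_f X) x us \<in> X" using run_in s' by blast
    obtain w0 where w0: "set w0 \<subseteq> U" "foldl (robot_f X) (foldl (robot_f X) x us) w0 = y"
      using conn_path[OF assms(3) x' t'(2)] by blast
    have "foldl (f_hat X k) (x, us) (w0 @ vs) = (y, vs)"
      using run_fhat[OF s'(3), of X x "w0 @ vs"] s' t' w0 by simp
    thus ?thesis unfolding reachable_def run_def using s' t' w0
      by (intro exI[of _ "w0 @ vs"]) auto
  qed
  show ?thesis unfolding essential_class_def using ne reach by blast
qed

end
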